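(* Let $l\ge1$ be an integer. (i) For every measure $m=\gamma_1\epsilon_{\lambda_1}+\cdots+\gamma_{l+1}\epsilon_{\lambda_{l+1}}$ with $\gamma_i>0$ and $0<\lambda_1<\cdots<\lambda_{l+1}$, there is a unique measure $M=c_1\epsilon_{\kappa_1}+\cdots+c_l\epsilon_{\kappa_l}$ with $c_i>0$ and $0<\kappa_1<\cdots<\kappa_l$ satisfying $$q+\frac r\lambda+\int\frac{m(du)}{\lambda+u}=\frac{1}{a\lambda+b+\int\frac{\lambda}{\lambda+u}M(du)},\qquad\lambda>0,\qquad(\ast)$$ with $a=1/\overline m_0$, $b=1/\overline m_{-1}$, $q=0=r$; moreover $\lambda_1<\kappa_1<\lambda_2<\cdots<\kappa_{l-1}<\lambda_l<\kappa_l<\lambda_{l+1}$. Conversely, for given $a,b>0$ and $M=c_1\epsilon_{\kappa_1}+\cdots+c_l\epsilon_{\kappa_l}$ ($c_i>0$, $0<\kappa_1<\cdots<\kappa_l$), there is a unique $m=\gamma_1\epsilon_{\lambda_1}+\cdots+\gamma_{l+1}\epsilon_{\lambda_{l+1}}$ ($\gamma_i>0$, $0<\lambda_1<\cdots<\lambda_{l+1}$) satisfying $(\ast)$ with $q=0=r$. (ii) Let $q>0$. For every $m=\gamma_1\epsilon_{\lambda_1}+\cdots+\gamma_l\epsilon_{\lambda_l}$ with $\gamma_i>0$, $0<\lambda_1<\cdots<\lambda_l$, there is a unique $M=c_1\epsilon_{\kappa_1}+\cdots+c_l\epsilon_{\kappa_l}$ ($c_i>0$, $0<\kappa_1<\cdots<\kappa_l$)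 satisfying $(\ast)$ with $r=0=a$ and $b=1/(q+\overline m_{-1})$; moreover $\lambda_1<\kappa_1<\lambda_2<\cdots<\kappa_{l-1}<\lambda_l<\kappa_l\le\lambda_l+\overline m_0q^{-1}$. Conversely, for given $b>0$ and $M=c_1\epsilon_{\kappa_1}+\cdots+c_l\epsilon_{\kappa_l}$ ($c_i>0$, $0<\kappa_1<\cdots<\kappa_l$), there is a unique $m=\gamma_1\epsilon_{\lambda_1}+\cdots+\gamma_l\epsilon_{\lambda_l}$ ($\gamma_i>0$, $0<\lambda_1<\cdots<\lambda_l$) satisfying $(\ast)$ with $q=1/(b+\overline M_0)$ and $r=0=a$.
   Context: $\epsilon_x$ denotes the Dirac measure at $x$. For a measure $m$ on $(0,\infty)$, $\overline m_\alpha=\int u^\alpha m(du)$. *)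

theory Defs
  imports Complex_Main
begin

text \<open>A finite discrete measure  w 1 \<epsilon>_(x 1) + ... + w n \<epsilon>_(x n)  on (0,\<infinity>) is represented
  by its weights w and atoms x (1-based indices).  disc_ok n w x: all weights positive and
  0 < x 1 < x 2 < ... < x n.\<close>

definition disc_ok :: "nat \<Rightarrow> (nat \<Rightarrow> real) \<Rightarrow> (nat \<Rightarrow> real) \<Rightarrow> bool" where
  "disc_ok n w x \<longleftrightarrow> (\<forall>i\<in>{1..n}. 0 < w i) \<and> 0 < x 1 \<and> (\<forall>i. 1 \<le> i \<and> i < n \<longrightarrow> x i < x (Suc i))"

definition dint :: "nat \<Rightarrow> (nat \<Rightarrow> real) \<Rightarrow> (nat \<Rightarrow> real) \<Rightarrow> (real \<Rightarrow> real) \<Rightarrow> real" where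
  "dint n w x f = (\<Sum>i=1..n. w i * f (x i))"

definition dmom :: "nat \<Rightarrow> (nat \<Rightarrow> real) \<Rightarrow> (nat \<Rightarrow> real) \<Rightarrow> real \<Rightarrow> real" where
  "dmom n w x \<alpha> = dint n w x (\<lambda>u. u powr \<alpha>)"

definition star_rel :: "real \<Rightarrow> real \<Rightarrow> real \<Rightarrow> real \<Rightarrow>
    nat \<Rightarrow> (nat \<Rightarrow> real) \<Rightarrow> (nat \<Rightarrow> real) \<Rightarrow> nat \<Rightarrow> (nat \<Rightarrow> real) \<Rightarrow> (nat \<Rightarrow> real) \<Rightarrow> bool" where
  "star_rel q r a b nm g lam nM c k \<longleftrightarrow>
     (\<forall>t>0. q + r / t + dint nm g lam (\<lambda>u. 1 / (t + u))
            = 1 / (a * t + b + dint nM c k (\<lambda>u. t / (t + u))))"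

end

theory Submission
  imports Defs "HOL-Computational_Algebra.Polynomial"
begin

definition PR :: "'a set \<Rightarrow> ('a \<Rightarrow> real) \<Rightarrow> real poly" where
  "PR S x = (\<Prod>i\<in>S. [:x i, 1:])"

definition NUM :: "'a set \<Rightarrow> ('a \<Rightarrow> real) \<Rightarrow> ('a \<Rightarrow> real) \<Rightarrow> real poly" where
  "NUM S w x = (\<Sum>i\<in>S. smult (w i) (PR (S - {i}) x))"

lemma poly_PR: "poly (PR S x) t = (\<Prod>i\<in>S. t + x i)"
  by (simp add: PR_def poly_prod add.commute)

lemma degree_PR: "finite S \<Longrightarrow> degree (PR S x) = card S"
  unfolding PR_def by (subst degree_prod_sum_eq) auto

lemma coeff_PR: "finite S \<Longrightarrow> coeff (PR S x) (card S) = 1"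
proof -
  assume f: "finite S"
  have "lead_coeff (PR S x) = 1" unfolding PR_def by (simp add: lead_coeff_prod)
  thus ?thesis using degree_PR[OF f, of x] by simp
qed

lemma poly_NUM:
  assumes "finite S" "\<forall>i\<in>S. t + x i \<noteq> 0"
  shows "poly (NUM S w x) t = poly (PR S x) t * (\<Sum>i\<in>S. w i / (t + x i))"
proof -
  have "poly (NUM S w x) t = (\<Sum>i\<in>S. w i * (\<Prod>j\<in>S-{i}. t + x j))"
    by (simp add: NUM_def poly_sum poly_PR)
  also have "\<dots> = (\<Sum>i\<in>S. (\<Prod>j\<in>S. t + x j) * (w i / (t + x i)))"
  proof (rule sum.cong[OF refl])
    fix i assume i: "i \<in> S"
    have "(\<Prod>j\<in>S. t + x j) = (t + x i) * (\<Prod>j\<in>S-{i}. t + x j)"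
      using assms(1) i by (simp add: prod.remove)
    thus "w i * (\<Prod>j\<in>S-{i}. t + x j) = (\<Prod>j\<in>S. t + x j) * (w i / (t + x i))"
      using assms(2) i by (simp add: field_simps)
  qed
  finally show ?thesis by (simp add: poly_PR sum_distrib_left)
qed

lemma poly_NUM_node:
  assumes "finite S" "k \<in> S" "inj_on x S"
  shows "poly (NUM S w x) (- x k) = w k * (\<Prod>i\<in>S-{k}. x i - x k)"
proof -
  have "poly (NUM S w x) (- x k) = (\<Sum>i\<in>S. w i * (\<Prod>j\<in>S-{i}. - x k + x j))"
    by (simp add: NUM_def poly_sum poly_PR)
  also have "\<dots> = w k * (\<Prod>j\<in>S-{k}. - x k + x j) + (\<Sum>i\<in>S-{k}. w i * (\<Prod>j\<in>S-{i}. - x k + x j))"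
    using assms by (simp add: sum.remove)
  also have "(\<Sum>i\<in>S-{k}. w i * (\<Prod>j\<in>S-{i}. - x k + x j)) = 0"
  proof (rule sum.neutral, rule ballI)
    fix i assume "i \<in> S - {k}"
    hence "k \<in> S - {i}" using assms by auto
    hence "(\<Prod>j\<in>S-{i}. - x k + x j) = 0"
      using assms(1) by (intro prod_zero) auto
    thus "w i * (\<Prod>j\<in>S-{i}. - x k + x j) = 0" by simp
  qed
  finally show ?thesis by simp
qed

lemma degree_NUM:
  assumes "finite S" 
  shows "degree (NUM S w x) \<le> card S - 1"
  unfolding NUM_def
proof (rule degree_sum_le[OF assms])
  fix i assume "i \<in> S"
  thus "degree (smult (w i) (PR (S - {i}) x)) \<le> card S - 1"
    using assms by (simp add: degree_PR)
qed

lemma coeff_NUM: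
  assumes "finite S"
  shows "coeff (NUM S w x) (card S - 1) = sum w S"
  unfolding NUM_def coeff_sum
proof (rule sum.cong[OF refl])
  fix i assume "i \<in> S"
  hence "card (S - {i}) = card S - 1" using assms by simp
  thus "coeff (smult (w i) (PR (S - {i}) x)) (card S - 1) = w i"
    using coeff_PR[of "S - {i}" x] assms by simp
qed

lemma lagrange:
  fixes x :: "'a \<Rightarrow> real" and N :: "real poly"
  assumes "finite I" "inj_on x I" "degree N < card I" "\<forall>i\<in>I. t + x i \<noteq> 0"
  shows "poly N t / (\<Prod>i\<in>I. t + x i) =
     (\<Sum>j\<in>I. (poly N (- x j) / (\<Prod>i\<in>I-{j}. x i - x j)) / (t + x j))"
proof -
  define w where "w j = poly N (- x j) / (\<Prod>i\<in>I-{j}. x i - x j)" for j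
  have D: "(\<Prod>i\<in>I-{j}. x i - x j) \<noteq> 0" if "j \<in> I" for j
  proof
    assume "(\<Prod>i\<in>I-{j}. x i - x j) = 0"
    then obtain i where "i \<in> I - {j}" "x i - x j = 0" using assms(1) prod_zero_iff[of "I-{j}" "\<lambda>i. x i - x j"] by auto
    thus False using assms(2) that by (auto simp: inj_on_def)
  qed
  have "N = NUM I w x"
  proof (rule poly_eqI_degree[of "(\<lambda>i. - x i) ` I"])
    fix y assume "y \<in> (\<lambda>i. - x i) ` I"
    then obtain k where k: "k \<in> I" "y = - x k" by auto
    show "poly N y = poly (NUM I w x) y"
      using poly_NUM_node[OF assms(1) k(1) assms(2), of w] D[OF k(1)] k by (simp add: w_def)
  next
    have c: "card ((\<lambda>i. - x i) ` I) = card I"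
      using assms(2) by (intro card_image) (auto simp: inj_on_def)
    show "degree N < card ((\<lambda>i. - x i) ` I)" using c assms(3) by simp
    show "degree (NUM I w x) < card ((\<lambda>i. - x i) ` I)" using c assms(3) degree_NUM[OF assms(1), of w x]
      by linarith
  qed
  hence "poly N t / (\<Prod>i\<in>I. t + x i) = (\<Sum>i\<in>I. w i / (t + x i))"
    using poly_NUM[OF assms(1) assms(4), of w] assms(4) assms(1)
    by (simp add: poly_PR)
  thus ?thesis by (simp add: w_def)
qed



definition chain :: "nat \<Rightarrow> nat \<Rightarrow> (nat \<Rightarrow> real) \<Rightarrow> bool" where
  "chain a b x \<longleftrightarrow> (\<forall>i. a \<le> i \<and> i < b \<longrightarrow> x i < x (Suc i))"

lemma chain_less:
  assumes "chain a b x" "a \<le> i" "i < j" "j \<le> b"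
  shows "x i < x j"
  using assms(3,4)
proof (induction j)
  case 0 then show ?case by simp
next
  case (Suc j)
  have s: "x j < x (Suc j)" using assms(1,2) Suc.prems unfolding chain_def by auto
  show ?case
  proof (cases "i = j")
    case True then show ?thesis using s by simp
  next
    case False
    then have "x i < x j" using Suc by simp
    then show ?thesis using s by simp
  qed
qed

lemma chain_le:
  assumes "chain a b x" "a \<le> i" "i \<le> j" "j \<le> b"
  shows "x i \<le> x j"
  using chain_less[OF assms(1,2) _ assms(4), of] assms(3)
  by (cases "i = j") (auto simp: less_imp_le)

lemma SIGN:
  fixes h :: "'a \<Rightarrow> real"
  assumes "finite I" "\<forall>i\<in>I. h i \<noteq> 0"
  shows "(-1) ^ card {i\<in>I. h i < 0} * prod h I > 0"
  using assms
proof (induction I rule: finite_induct)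
  case empty then show ?case by simp
next
  case (insert a F)
  have IH: "(-1) ^ card {i\<in>F. h i < 0} * prod h F > 0" using insert by simp
  have fin: "finite {i\<in>F. h i < 0}" using insert by simp
  show ?case
  proof (cases "h a < 0")
    case True
    have "{i\<in>insert a F. h i < 0} = insert a {i\<in>F. h i < 0}" using True by auto
    moreover have "a \<notin> {i\<in>F. h i < 0}" using insert by simp
    ultimately have c: "card {i\<in>insert a F. h i < 0} = Suc (card {i\<in>F. h i < 0})"
      using fin by simp
    have "(-1) ^ card {i\<in>insert a F. h i < 0} * prod h (insert a F)
        = (- h a) * ((-1) ^ card {i\<in>F. h i < 0} * prod h F)"
      using c insert by simp
    then show ?thesis using IH True by (simp add: mult_neg_pos)
  next
    case False
    then have ha: "h a > 0" using insert by force
    have "{i\<in>insert a F. h i < 0} = {i\<in>F. h i < 0}" using False by auto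
    then have "(-1) ^ card {i\<in>insert a F. h i < 0} * prod h (insert a F)
        = h a * ((-1) ^ card {i\<in>F. h i < 0} * prod h F)"
      using insert by simp
    then show ?thesis using IH ha by simp
  qed
qed

lemma C1sign:
  assumes "chain a b x" "k \<in> {a..b}"
  shows "(-1) ^ (k - a) * (\<Prod>i\<in>{a..b}-{k}. x i - x k) > 0"
proof -
  have s: "{i\<in>{a..b}-{k}. x i - x k < 0} = {a..<k}"
  proof (rule set_eqI, rule iffI)
    fix i assume "i \<in> {i\<in>{a..b}-{k}. x i - x k < 0}"
    then have i: "a \<le> i" "i \<le> b" "i \<noteq> k" "x i < x k" by auto
    have "i < k"
    proof (rule ccontr)
      assume "\<not> i < k"
      then have "k < i" using i by simp
      then have "x k < x i" using chain_less[OF assms(1) _ _ i(2)] assms(2) by auto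
      then show False using i by simp
    qed
    then show "i \<in> {a..<k}" using i by simp
  next
    fix i assume "i \<in> {a..<k}"
    then show "i \<in> {i\<in>{a..b}-{k}. x i - x k < 0}"
      using chain_less[OF assms(1), of i k] assms(2) by auto
  qed
  have nz: "\<forall>i\<in>{a..b}-{k}. x i - x k \<noteq> 0"
  proof
    fix i assume i: "i \<in> {a..b}-{k}"
    show "x i - x k \<noteq> 0"
    proof (cases "i < k")
      case True then show ?thesis using chain_less[OF assms(1), of i k] assms(2) i by auto
    next
      case False then have "k < i" using i by auto
      then show ?thesis using chain_less[OF assms(1), of k i] assms(2) i by auto
    qed
  qed
  show ?thesis using SIGN[OF _ nz] s by simp
qed

lemma C2sign:
  assumes "chain 1 n x" "j \<le> n" "1 \<le> j \<longrightarrow> x j < y" "j < n \<longrightarrow> y < x (Suc j)"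
  shows "(-1) ^ j * (\<Prod>i\<in>{1..n}. - y + x i) > 0"
proof -
  have lo: "x i < y" if "1 \<le> i" "i \<le> j" for i
    using chain_le[OF assms(1) that(1) that(2)] assms(2,3) that by auto
  have hi: "y < x i" if "j < i" "i \<le> n" for i
    using chain_le[OF assms(1), of "Suc j" i] assms(2,4) that by auto
  have s: "{i\<in>{1..n}. - y + x i < 0} = {1..j}"
    using lo hi assms(2) by (auto simp: not_less) (meson hi less_asym' not_le_imp_less)
  have nz: "\<forall>i\<in>{1..n}. - y + x i \<noteq> 0"
    using lo hi by (metis atLeastAtMost_iff add.commute add_less_same_cancel1 diff_add_cancel
       less_irrefl neg_less_iff_less not_le_imp_less uminus_add_conv_diff)
  show ?thesis using SIGN[OF _ nz] s by simp
qed

lemma IVT0: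
  fixes P :: "real poly"
  assumes "a \<le> b" "poly P a * poly P b \<le> 0"
  shows "\<exists>x. a \<le> x \<and> x \<le> b \<and> poly P x = 0"
proof (cases "poly P a \<le> 0 \<and> 0 \<le> poly P b")
  case True then show ?thesis using IVT[of "poly P" a 0 b] assms by auto
next
  case False
  then have "poly P b \<le> 0 \<and> 0 \<le> poly P a" using assms(2)
    by (metis mult_nonneg_nonneg mult_nonpos_nonpos le_less not_le mult_eq_0_iff zero_less_mult_iff)
  then show ?thesis using IVT2[of "poly P" b 0 a] assms by auto
qed

lemma ROOT2:
  fixes P :: "real poly"
  assumes "u < v" "(-1) ^ k * poly P (-u) > 0" "(-1) ^ Suc k * poly P (-v) \<ge> 0"
  shows "\<exists>z. u < z \<and> z \<le> v \<and> poly P (-z) = 0"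
proof -
  have sq: "((-1::real) ^ k) * ((-1) ^ k) = 1" by (simp add: power_mult_distrib[symmetric])
  have "((-1) ^ k * poly P (-u)) * ((-1) ^ Suc k * poly P (-v)) \<ge> 0"
    by (rule mult_nonneg_nonneg[OF less_imp_le[OF assms(2)] assms(3)])
  hence "- (((-1) ^ k * (-1) ^ k) * (poly P (-u) * poly P (-v))) \<ge> 0"
    by (simp add: algebra_simps)
  hence "poly P (-v) * poly P (-u) \<le> 0" using sq by (simp add: mult.commute)
  then obtain x where x: "-v \<le> x" "x \<le> -u" "poly P x = 0" using IVT0[of "-v" "-u" P] assms(1) by auto
  have "x \<noteq> -u" using assms(2) x(3) by auto
  thus ?thesis using x by (intro exI[of _ "-x"]) auto
qed

lemma ROOT1:
  fixes P :: "real poly"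
  assumes "u < v" "(-1) ^ k * poly P (-u) > 0" "(-1) ^ Suc k * poly P (-v) > 0"
  shows "\<exists>z. u < z \<and> z < v \<and> poly P (-z) = 0"
proof -
  obtain z where "u < z" "z \<le> v" "poly P (-z) = 0" using ROOT2[OF assms(1,2)] assms(3) by force
  moreover have "z \<noteq> v" using assms(3) calculation(3) by auto
  ultimately show ?thesis by auto
qed

lemma disc_chain: "disc_ok n w x \<Longrightarrow> chain 1 n x"
  by (simp add: disc_ok_def chain_def)

lemma disc_pos: "disc_ok n w x \<Longrightarrow> i \<in> {1..n} \<Longrightarrow> 0 < x i"
  using chain_le[OF disc_chain, of n w x 1 i] by (auto simp: disc_ok_def)



lemma U0:
  fixes h :: "real \<Rightarrow> real" and S :: "real set"
  assumes "finite S" "\<forall>u\<in>S. u > 0" "\<forall>t>0. (\<Sum>u\<in>S. h u / (t + u)) = 0"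
  shows "\<forall>u\<in>S. h u = 0"
proof
  fix u assume u: "u \<in> S"
  define p where "p = NUM S h (\<lambda>v. v)"
  have roots: "{0<..} \<subseteq> {x. poly p x = 0}"
  proof
    fix t :: real assume "t \<in> {0<..}"
    then have t: "t > 0" by simp
    have "\<forall>i\<in>S. t + i \<noteq> 0" using assms(2) t by force
    then show "t \<in> {x. poly p x = 0}" using poly_NUM[OF assms(1), of t "\<lambda>v. v" h] assms(3) t
      by (simp add: p_def)
  qed
  have "p = 0"
  proof (rule ccontr)
    assume "p \<noteq> 0"
    then have "finite {x. poly p x = 0}" by (rule poly_roots_finite)
    then have "finite {(0::real)<..}" using roots finite_subset by blast
    then show False using infinite_Ioi[of "0::real"] by simp
  qed
  then have "0 = h u * (\<Prod>i\<in>S-{u}. i - u)"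
    using poly_NUM_node[OF assms(1) u, of "\<lambda>v. v" h] by (simp add: p_def)
  moreover have "(\<Prod>i\<in>S-{u}. i - u) \<noteq> 0" using assms(1) by simp
  ultimately show "h u = 0" by simp
qed

lemma RG:
  fixes w x :: "nat \<Rightarrow> real"
  assumes "finite T" "x ` {1..n} \<subseteq> T"
  shows "(\<Sum>i=1..n. w i / (t + x i)) = (\<Sum>u\<in>T. (\<Sum>i\<in>{i\<in>{1..n}. x i = u}. w i) / (t + u))"
proof -
  have "(\<Sum>i=1..n. w i / (t + x i)) = (\<Sum>u\<in>T. \<Sum>i\<in>{i\<in>{1..n}. x i = u}. w i / (t + x i))"
    using sum.group[OF _ assms(1) assms(2), of "\<lambda>i. w i / (t + x i)"] by simp
  also have "\<dots> = (\<Sum>u\<in>T. (\<Sum>i\<in>{i\<in>{1..n}. x i = u}. w i) / (t + u))"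
    by (rule sum.cong[OF refl]) (simp add: sum_divide_distrib)
  finally show ?thesis .
qed

lemma chain_inj: assumes "chain 1 n x" shows "inj_on x {1..n}"
proof (rule inj_onI)
  fix i j assume i: "i \<in> {1..n}" and j: "j \<in> {1..n}" and e: "x i = x j"
  show "i = j"
  proof (rule ccontr)
    assume "i \<noteq> j"
    then consider "i < j" | "j < i" by linarith
    then show False
    proof cases
      case 1 then show False using chain_less[OF assms, of i j] i j e by simp
    next
      case 2 then show False using chain_less[OF assms, of j i] i j e by simp
    qed
  qed
qed

lemma singl: assumes "chain 1 n x" "k \<in> {1..n}" shows "{i\<in>{1..n}. x i = x k} = {k}"
proof -
  have "inj_on x {1..n}" by (rule chain_inj[OF assms(1)])
  then show ?thesis using assms(2) unfolding inj_on_def by blast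
qed

lemma U:
  assumes d: "disc_ok n w x" and d': "disc_ok n w' x'"
    and eq: "\<forall>t>0. (\<Sum>i=1..n. w i / (t + x i)) = (\<Sum>i=1..n. w' i / (t + x' i))"
  shows "\<forall>i\<in>{1..n}. w' i = w i \<and> x' i = x i"
proof -
  define S where "S = x ` {1..n} \<union> x' ` {1..n}"
  define A where "A u = (\<Sum>i\<in>{i\<in>{1..n}. x i = u}. w i)" for u
  define B where "B u = (\<Sum>i\<in>{i\<in>{1..n}. x' i = u}. w' i)" for u
  have fS: "finite S" by (simp add: S_def)
  have pS: "\<forall>u\<in>S. u > 0" using disc_pos[OF d] disc_pos[OF d'] by (auto simp: S_def)
  have "\<forall>t>0. (\<Sum>u\<in>S. (A u - B u) / (t + u)) = 0"
  proof (intro allI impI)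
    fix t :: real assume t: "t > 0"
    have "(\<Sum>u\<in>S. (A u - B u) / (t + u)) = (\<Sum>u\<in>S. A u / (t + u)) - (\<Sum>u\<in>S. B u / (t + u))"
      by (simp add: diff_divide_distrib sum_subtractf)
    also have "\<dots> = (\<Sum>i=1..n. w i / (t + x i)) - (\<Sum>i=1..n. w' i / (t + x' i))"
      using RG[OF fS, of x n w t] RG[OF fS, of x' n w' t] by (simp add: S_def A_def B_def)
    also have "\<dots> = 0" using eq t by simp
    finally show "(\<Sum>u\<in>S. (A u - B u) / (t + u)) = 0" .
  qed
  from U0[OF fS pS this] have AB: "\<forall>u\<in>S. A u = B u" by simp
  have c: "chain 1 n x" "chain 1 n x'" by (rule disc_chain[OF d], rule disc_chain[OF d'])
  have Ax: "A (x k) = w k" if "k \<in> {1..n}" for k using singl[OF c(1) that] by (simp add: A_def)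
  have Bx: "B (x' k) = w' k" if "k \<in> {1..n}" for k using singl[OF c(2) that] by (simp add: B_def)
  have sub1: "x ` {1..n} \<subseteq> x' ` {1..n}"
  proof
    fix u assume "u \<in> x ` {1..n}"
    then obtain k where k: "k \<in> {1..n}" "u = x k" by auto
    have "B u = w k" using AB Ax[OF k(1)] k by (auto simp: S_def)
    moreover have "w k > 0" using d k by (auto simp: disc_ok_def)
    ultimately have "{i\<in>{1..n}. x' i = u} \<noteq> {}" unfolding B_def by (metis less_irrefl sum.empty)
    then show "u \<in> x' ` {1..n}" by blast
  qed
  have sub2: "x' ` {1..n} \<subseteq> x ` {1..n}"
  proof
    fix u assume "u \<in> x' ` {1..n}"
    then obtain k where k: "k \<in> {1..n}" "u = x' k" by auto
    have "A u = w' k" using AB Bx[OF k(1)] k by (auto simp: S_def)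
    moreover have "w' k > 0" using d' k by (auto simp: disc_ok_def)
    ultimately have "{i\<in>{1..n}. x i = u} \<noteq> {}" unfolding A_def by (metis less_irrefl sum.empty)
    then show "u \<in> x ` {1..n}" by blast
  qed
  have sorted: "sorted_wrt (<) (map y [1..<Suc n])" if "chain 1 n y" for y
    unfolding sorted_wrt_iff_nth_less
  proof (intro allI impI)
    fix i j assume ij: "i < j" "j < length (map y [1..<Suc n])"
    then show "map y [1..<Suc n] ! i < map y [1..<Suc n] ! j"
      using chain_less[OF that, of "Suc i" "Suc j"] by (simp del: upt_Suc)
  qed
  have e: "map x' [1..<Suc n] = map x [1..<Suc n]"
    by (rule strict_sorted_equal[OF sorted[OF c(1)] sorted[OF c(2)]])
       (simp only: set_map set_upt atLeastLessThanSuc_atLeastAtMost, use sub1 sub2 in blast)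
  have xx: "x' i = x i" if "i \<in> {1..n}" for i
  proof -
    have "map x' [1..<Suc n] ! (i - 1) = map x [1..<Suc n] ! (i - 1)" by (simp only: e)
    moreover have "i - 1 < length [1..<Suc n]" using that by auto
    moreover have "[1..<Suc n] ! (i - 1) = i" using that by (simp del: upt_Suc add: nth_upt)
    ultimately show ?thesis by (simp del: upt_Suc)
  qed
  show ?thesis
  proof
    fix i assume i: "i \<in> {1..n}"
    have "w i = w' i" using Ax[OF i] Bx[OF i] AB xx[OF i] i by (auto simp: S_def)
    then show "w' i = w i \<and> x' i = x i" using xx[OF i] by simp
  qed
qed



lemma chain_inj_gen: assumes "chain a b x" shows "inj_on x {a..b}"
proof (rule inj_onI)
  fix i j assume i: "i \<in> {a..b}" and j: "j \<in> {a..b}" and e: "x i = x j"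
  show "i = j"
  proof (rule ccontr)
    assume "i \<noteq> j"
    then consider "i < j" | "j < i" by linarith
    then show False
    proof cases
      case 1 then show False using chain_less[OF assms, of i j] i j e by simp
    next
      case 2 then show False using chain_less[OF assms, of j i] i j e by simp
    qed
  qed
qed

lemma ratio_pos:
  fixes A B :: real
  assumes "(-1) ^ j * A > 0" "(-1) ^ j * B > 0"
  shows "A / B > 0"
proof -
  have "((-1::real) ^ j) \<noteq> 0" by simp
  then have "A / B = ((-1) ^ j * A) / ((-1) ^ j * B)" by simp
  also have "\<dots> > 0" by (rule divide_pos_pos[OF assms])
  finally show ?thesis .
qed

lemma prod_pos_gen: "(\<forall>i\<in>S. 0 < f i) \<Longrightarrow> 0 < (\<Prod>i\<in>S. f i :: real)"
  by (rule prod_pos) auto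

lemma deg_diff_monic:
  fixes P Q :: "real poly"
  assumes "degree P \<le> m" "degree Q \<le> m" "coeff P m = coeff Q m" "m \<ge> 1"
  shows "degree (P - Q) \<le> m - 1"
proof (rule degree_le, intro allI impI)
  fix i assume "m - 1 < i"
  then consider "i = m" | "i > m" using assms(4) by linarith
  then show "coeff (P - Q) i = 0"
  proof cases
    case 1 then show ?thesis using assms(3) by simp
  next
    case 2 then show ?thesis using assms(1,2) by (simp add: coeff_eq_0)
  qed
qed

lemma FWD:
  fixes lam k :: "nat \<Rightarrow> real"
  assumes l: "l \<ge> 1" and n: "n = l \<or> n = Suc l" and ch: "chain 1 n lam" and p1: "0 < lam 1"
    and il: "\<forall>j\<in>{1..l}. lam j < k j \<and> (Suc j \<le> n \<longrightarrow> k j < lam (Suc j))"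
  assumes k'_def: "k' = (\<lambda>j. if j = 0 then 0 else k j)"
  assumes e_def: "e = (\<lambda>j. poly (PR {1..n} lam) (- k' j) / (\<Prod>i\<in>{0..l}-{j}. k' i - k' j))"
  shows "chain 1 l k" "0 < k 1" "\<forall>j\<in>{1..l}. e j > 0"
    "e 0 = poly (PR {1..n} lam) 0 / poly (PR {1..l} k) 0"
    "\<forall>t>0. poly (PR {1..n} lam) t / poly (PR {1..l} k) t =
        (if n = Suc l then t else 0) + e 0 + (\<Sum>j=1..l. e j * (t / (t + k j)))"
proof -
  show chk: "chain 1 l k"
    unfolding chain_def
  proof (intro allI impI)
    fix i assume i: "1 \<le> i \<and> i < l"
    have "k i < lam (Suc i)" using il i n by auto
    also have "lam (Suc i) < k (Suc i)" using il i by auto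
    finally show "k i < k (Suc i)" .
  qed
  show k1: "0 < k 1" using il l p1 by force
  have kpos: "0 < k j" if "j \<in> {1..l}" for j
    using chain_le[OF chk, of 1 j] that k1 by auto
  have chk': "chain 0 l k'"
    unfolding chain_def
  proof (intro allI impI)
    fix i assume i: "0 \<le> i \<and> i < l"
    show "k' i < k' (Suc i)"
    proof (cases "i = 0")
      case True then show ?thesis using k1 by (simp add: k'_def)
    next
      case False then show ?thesis using chk i unfolding chain_def k'_def by simp
    qed
  qed
  have k'nn: "0 \<le> k' i" if "i \<in> {0..l}" for i
  proof (cases "i = 0")
    case True then show ?thesis by (simp add: k'_def)
  next
    case False then show ?thesis using kpos[of i] that by (simp add: k'_def)
  qed
  show "\<forall>j\<in>{1..l}. e j > 0"
  proof
    fix j assume j: "j \<in> {1..l}"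
    have num: "(-1) ^ j * poly (PR {1..n} lam) (- k' j) > 0"
      unfolding poly_PR using C2sign[OF ch, of j "k j"] il j n by (auto simp: k'_def)
    have den: "(-1) ^ j * (\<Prod>i\<in>{0..l}-{j}. k' i - k' j) > 0"
      using C1sign[OF chk', of j] j by simp
    show "e j > 0" unfolding e_def by (rule ratio_pos[OF num den])
  qed
  have s0: "{0..l} = insert 0 {1..l}" by auto
  show "e 0 = poly (PR {1..n} lam) 0 / poly (PR {1..l} k) 0"
    unfolding e_def poly_PR by (simp add: s0 k'_def)
  define Q where "Q = PR {1..n} lam"
  define K where "K = PR {1..l} k"
  define Z where "Z = PR {0..l} k'"
  define N where "N = Q - (if n = Suc l then Z else 0)"
  have degN: "degree N < card {0..l}"
  proof (cases "n = Suc l")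
    case True
    have "degree (Q - Z) \<le> Suc l - 1"
      by (rule deg_diff_monic) (use True in \<open>auto simp: Q_def Z_def degree_PR coeff_PR[of "{1..Suc l}", simplified] coeff_PR[of "{0..l}", simplified]\<close>)
    then show ?thesis using True by (simp add: N_def)
  next
    case False
    then have "n = l" using n by simp
    then show ?thesis by (simp add: N_def Q_def degree_PR)
  qed
  have injk': "inj_on k' {0..l}" by (rule chain_inj_gen[OF chk'])
  show "\<forall>t>0. poly (PR {1..n} lam) t / poly (PR {1..l} k) t =
        (if n = Suc l then t else 0) + e 0 + (\<Sum>j=1..l. e j * (t / (t + k j)))"
  proof (intro allI impI)
    fix t :: real assume t: "t > 0"
    have nz: "\<forall>i\<in>{0..l}. t + k' i \<noteq> 0" using k'nn t by (metis add_pos_nonneg less_irrefl)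
    have L: "poly N t / (\<Prod>i\<in>{0..l}. t + k' i) =
       (\<Sum>j\<in>{0..l}. (poly N (- k' j) / (\<Prod>i\<in>{0..l}-{j}. k' i - k' j)) / (t + k' j))"
      by (rule lagrange[OF _ injk' degN nz]) simp
    have Nj: "poly N (- k' j) = poly Q (- k' j)" if "j \<in> {0..l}" for j
    proof -
      have "poly Z (- k' j) = 0" unfolding Z_def poly_PR using that by (intro prod_zero) auto
      then show ?thesis by (simp add: N_def)
    qed
    have Kt: "poly K t > 0" unfolding K_def poly_PR using kpos t
      by (intro prod_pos_gen) (simp add: add_pos_pos)
    have Zt: "(\<Prod>i\<in>{0..l}. t + k' i) = t * poly K t"
      unfolding K_def poly_PR by (simp add: s0 k'_def)
    have R: "(\<Sum>j\<in>{0..l}. (poly N (- k' j) / (\<Prod>i\<in>{0..l}-{j}. k' i - k' j)) / (t + k' j))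
        = e 0 / t + (\<Sum>j=1..l. e j / (t + k j))"
    proof -
      have "(\<Sum>j\<in>{0..l}. (poly N (- k' j) / (\<Prod>i\<in>{0..l}-{j}. k' i - k' j)) / (t + k' j))
          = (\<Sum>j\<in>{0..l}. e j / (t + k' j))"
        using Nj by (intro sum.cong) (auto simp: e_def Q_def)
      also have "\<dots> = e 0 / t + (\<Sum>j=1..l. e j / (t + k' j))" by (simp add: s0 k'_def)
      also have "(\<Sum>j=1..l. e j / (t + k' j)) = (\<Sum>j=1..l. e j / (t + k j))"
        by (intro sum.cong) (auto simp: k'_def)
      finally show ?thesis .
    qed
    have PN: "poly N t = poly Q t - (if n = Suc l then t * poly K t else 0)"
      using Zt by (simp add: N_def Z_def poly_PR)
    have main: "(poly Q t - (if n = Suc l then t * poly K t else 0)) / (t * poly K t)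
        = e 0 / t + (\<Sum>j=1..l. e j / (t + k j))"
      using L R Zt PN by simp
    have "poly Q t / poly K t = (if n = Suc l then t else 0) +
        t * ((poly Q t - (if n = Suc l then t * poly K t else 0)) / (t * poly K t))"
      using Kt t by (auto simp: field_simps)
    also have "\<dots> = (if n = Suc l then t else 0) + e 0 + (\<Sum>j=1..l. e j * (t / (t + k j)))"
      unfolding main using t by (simp add: distrib_left sum_distrib_left field_simps)
    finally show "poly (PR {1..n} lam) t / poly (PR {1..l} k) t =
        (if n = Suc l then t else 0) + e 0 + (\<Sum>j=1..l. e j * (t / (t + k j)))"
      by (simp add: Q_def K_def)
  qed
qed



lemma BWD:
  fixes lam k :: "nat \<Rightarrow> real"
  assumes l: "l \<ge> 1" and n: "n = l \<or> n = Suc l" and ch: "chain 1 l k" and k1: "0 < k 1"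
    and il: "\<forall>i\<in>{1..n}. 0 < lam i \<and> (2 \<le> i \<longrightarrow> k (i - 1) < lam i) \<and> (i \<le> l \<longrightarrow> lam i < k i)"
  assumes e_def: "e = (\<lambda>i. poly (PR {1..l} k) (- lam i) / (\<Prod>j\<in>{1..n}-{i}. lam j - lam i))"
  shows "chain 1 n lam" "\<forall>i\<in>{1..n}. e i > 0"
    "\<forall>t>0. poly (PR {1..l} k) t / poly (PR {1..n} lam) t =
        (if n = l then 1 else 0) + (\<Sum>i=1..n. e i / (t + lam i))"
proof -
  show chl: "chain 1 n lam"
    unfolding chain_def
  proof (intro allI impI)
    fix i assume i: "1 \<le> i \<and> i < n"
    have "lam i < k i" using il i n by auto
    also have "k i < lam (Suc i)"
    proof -
      have "Suc i \<in> {1..n}" "2 \<le> Suc i" using i by auto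
      then have "k (Suc i - 1) < lam (Suc i)" using il by blast
      then show ?thesis by simp
    qed
    finally show "lam i < lam (Suc i)" .
  qed
  show "\<forall>i\<in>{1..n}. e i > 0"
  proof
    fix i assume i: "i \<in> {1..n}"
    have c1: "1 \<le> i - 1 \<longrightarrow> k (i - 1) < lam i" using il i by auto
    have c2: "i - 1 < l \<longrightarrow> lam i < k (Suc (i - 1))" using il i by auto
    have num: "(-1) ^ (i - 1) * poly (PR {1..l} k) (- lam i) > 0"
    proof -
      have "i - 1 \<le> l" using i n by auto
      from C2sign[OF ch this c1 c2] show ?thesis unfolding poly_PR by simp
    qed
    have den: "(-1) ^ (i - 1) * (\<Prod>j\<in>{1..n}-{i}. lam j - lam i) > 0"
      using C1sign[OF chl, of i] i by simp
    show "e i > 0" unfolding e_def by (rule ratio_pos[OF num den])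
  qed
  define K where "K = PR {1..l} k"
  define L where "L = PR {1..n} lam"
  define N where "N = K - (if n = l then L else 0)"
  have degN: "degree N < card {1..n}"
  proof (cases "n = l")
    case True
    have "degree (K - L) \<le> l - 1"
      by (rule deg_diff_monic) (use True l in \<open>auto simp: K_def L_def degree_PR coeff_PR[of "{1..l}", simplified]\<close>)
    then show ?thesis using True l by (simp add: N_def)
  next
    case False
    then have "n = Suc l" using n by simp
    then show ?thesis by (simp add: N_def K_def degree_PR)
  qed
  have inj: "inj_on lam {1..n}" by (rule chain_inj_gen[OF chl])
  show "\<forall>t>0. poly (PR {1..l} k) t / poly (PR {1..n} lam) t =
        (if n = l then 1 else 0) + (\<Sum>i=1..n. e i / (t + lam i))"
  proof (intro allI impI)
    fix t :: real assume t: "t > 0"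
    have nz: "\<forall>i\<in>{1..n}. t + lam i \<noteq> 0" using il t by (metis add_pos_pos less_irrefl)
    have La: "poly N t / (\<Prod>i\<in>{1..n}. t + lam i) =
       (\<Sum>j\<in>{1..n}. (poly N (- lam j) / (\<Prod>i\<in>{1..n}-{j}. lam i - lam j)) / (t + lam j))"
      by (rule lagrange[OF _ inj degN nz]) simp
    have Nj: "poly N (- lam j) = poly K (- lam j)" if "j \<in> {1..n}" for j
    proof -
      have "poly L (- lam j) = 0" unfolding L_def poly_PR using that by (intro prod_zero) auto
      then show ?thesis by (simp add: N_def)
    qed
    have Lt: "poly L t > 0" unfolding L_def poly_PR using il t
      by (intro prod_pos_gen) (simp add: add_pos_pos)
    have R: "(\<Sum>j\<in>{1..n}. (poly N (- lam j) / (\<Prod>i\<in>{1..n}-{j}. lam i - lam j)) / (t + lam j))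
        = (\<Sum>i=1..n. e i / (t + lam i))"
      using Nj by (intro sum.cong) (auto simp: e_def K_def)
    have PN: "poly N t = poly K t - (if n = l then poly L t else 0)"
      by (simp add: N_def)
    have main: "(poly K t - (if n = l then poly L t else 0)) / poly L t = (\<Sum>i=1..n. e i / (t + lam i))"
      using La R PN by (simp add: L_def poly_PR)
    have "poly K t / poly L t = (if n = l then 1 else 0) + (poly K t - (if n = l then poly L t else 0)) / poly L t"
      using Lt by (auto simp: field_simps)
    also have "\<dots> = (if n = l then 1 else 0) + (\<Sum>i=1..n. e i / (t + lam i))"
      unfolding main ..
    finally show "poly (PR {1..l} k) t / poly (PR {1..n} lam) t =
        (if n = l then 1 else 0) + (\<Sum>i=1..n. e i / (t + lam i))"
      by (simp add: K_def L_def)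
  qed
qed



lemma FACT:
  fixes P :: "real poly"
  assumes "degree P \<le> m" "coeff P m = s" "m \<ge> 1" "chain 1 m x"
    "\<forall>i\<in>{1..m}. poly P (- x i) = 0"
  shows "P = smult s (PR {1..m} x)"
proof -
  have d: "degree (P - smult s (PR {1..m} x)) \<le> m - 1"
    by (rule deg_diff_monic) (use assms in \<open>auto simp: degree_PR coeff_PR[of "{1..m}", simplified]\<close>)
  have inj: "inj_on x {1..m}" by (rule chain_inj_gen[OF assms(4)])
  have inj2: "inj_on (\<lambda>i. - x i) {1..m}" using inj unfolding inj_on_def by (metis neg_equal_iff_equal)
  have c: "card ((\<lambda>i. - x i) ` {1..m}) = m"
    using card_image[OF inj2] by simp
  have "P - smult s (PR {1..m} x) = 0"
  proof (rule poly_eqI_degree[of "(\<lambda>i. - x i) ` {1..m}"])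
    fix y assume "y \<in> (\<lambda>i. - x i) ` {1..m}"
    then obtain i where i: "i \<in> {1..m}" "y = - x i" by auto
    have "poly (PR {1..m} x) (- x i) = 0" unfolding poly_PR using i(1) by (intro prod_zero) auto
    then show "poly (P - smult s (PR {1..m} x)) y = poly 0 y" using assms(5) i by simp
  qed (use c d assms(3) in auto)
  then show ?thesis by simp
qed

lemma dint_div: "(\<Sum>i=1..n. c i * (t / (t + k i))) = t * (\<Sum>i=1..n. c i / (t + (k i::real)))"
  by (simp add: sum_distrib_left mult.commute)

lemma UM:
  assumes "disc_ok l c k" "disc_ok l c' k'"
    "star_rel q r a b nm g lam l c k" "star_rel q r a b nm g lam l c' k'"
  shows "\<forall>i\<in>{1..l}. c' i = c i \<and> k' i = k i"
proof (rule U[OF assms(1,2)], intro allI impI)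
  fix t :: real assume t: "t > 0"
  have "1 / (a * t + b + dint l c k (\<lambda>u. t / (t + u))) = 1 / (a * t + b + dint l c' k' (\<lambda>u. t / (t + u)))"
    using assms(3,4) t unfolding star_rel_def by metis
  then have "dint l c k (\<lambda>u. t / (t + u)) = dint l c' k' (\<lambda>u. t / (t + u))" by simp
  then have "t * (\<Sum>i=1..l. c i / (t + k i)) = t * (\<Sum>i=1..l. c' i / (t + k' i))"
    unfolding dint_def dint_div .
  then show "(\<Sum>i=1..l. c i / (t + k i)) = (\<Sum>i=1..l. c' i / (t + k' i))" using t by simp
qed

lemma UMm:
  assumes "disc_ok n g lam" "disc_ok n g' lam'"
    "star_rel q r a b n g lam nM c k" "star_rel q r a b n g' lam' nM c k"
  shows "\<forall>i\<in>{1..n}. g' i = g i \<and> lam' i = lam i"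
proof (rule U[OF assms(1,2)], intro allI impI)
  fix t :: real assume t: "t > 0"
  have "q + r / t + dint n g lam (\<lambda>u. 1 / (t + u)) = q + r / t + dint n g' lam' (\<lambda>u. 1 / (t + u))"
    using assms(3,4) t unfolding star_rel_def by metis
  then show "(\<Sum>i=1..n. g i / (t + lam i)) = (\<Sum>i=1..n. g' i / (t + lam' i))"
    by (simp add: dint_def)
qed

lemma dmom0: "disc_ok n w x \<Longrightarrow> dmom n w x 0 = (\<Sum>i=1..n. w i)"
  unfolding dmom_def dint_def by (intro sum.cong) (auto dest: disc_pos)

lemma dmomm1: "disc_ok n w x \<Longrightarrow> dmom n w x (-1) = (\<Sum>i=1..n. w i / x i)"
  unfolding dmom_def dint_def by (intro sum.cong) (auto dest: disc_pos simp: powr_neg_one)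

definition GP :: "real \<Rightarrow> real \<Rightarrow> (nat \<Rightarrow> real) \<Rightarrow> (nat \<Rightarrow> real) \<Rightarrow> nat \<Rightarrow> real poly" where
  "GP a b c k l = smult b (PR {1..l} k) + smult a (pCons 0 (PR {1..l} k)) + pCons 0 (NUM {1..l} c k)"

lemma GP_poly:
  assumes "\<forall>i\<in>{1..l}. t + k i \<noteq> 0"
  shows "poly (GP a b c k l) t = poly (PR {1..l} k) t * (a * t + b + (\<Sum>j=1..l. c j * (t / (t + k j))))"
  using poly_NUM[of "{1..l}" t k c] assms
  by (simp add: GP_def dint_div algebra_simps sum_distrib_left)

lemma GP_sign:
  assumes l: "l \<ge> 1" and b: "b > 0" and d: "disc_ok l c k"
  shows "\<forall>j\<in>{0..l}. (-1) ^ j * poly (GP a b c k l) (- (if j = 0 then 0 else k j)) > 0"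
proof
  fix j assume j: "j \<in> {0..l}"
  have ch: "chain 1 l k" by (rule disc_chain[OF d])
  show "(-1) ^ j * poly (GP a b c k l) (- (if j = 0 then 0 else k j)) > 0"
  proof (cases "j = 0")
    case True
    have "poly (PR {1..l} k) 0 > 0" unfolding poly_PR
      using disc_pos[OF d] by (intro prod_pos_gen) auto
    then show ?thesis using True b by (simp add: GP_def)
  next
    case False
    then have j1: "j \<in> {1..l}" using j by auto
    have z: "poly (PR {1..l} k) (- k j) = 0" unfolding poly_PR using j1 by (intro prod_zero) auto
    have G: "poly (GP a b c k l) (- k j) = - k j * (c j * (\<Prod>i\<in>{1..l}-{j}. k i - k j))"
      using z poly_NUM_node[of "{1..l}" j k c] j1 chain_inj_gen[OF ch] by (simp add: GP_def)
    have s: "(-1) ^ (j - 1) * (\<Prod>i\<in>{1..l}-{j}. k i - k j) > 0" using C1sign[OF ch j1] by simp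
    have pm: "(-1::real) ^ j = - ((-1) ^ (j - 1))" using False
      by (metis One_nat_def Suc_pred mult_minus1 neq0_conv power_Suc)
    have "(-1) ^ j * poly (GP a b c k l) (- k j) = k j * c j * ((-1) ^ (j - 1) * (\<Prod>i\<in>{1..l}-{j}. k i - k j))"
      using G pm by (simp add: algebra_simps)
    also have "\<dots> > 0" using s disc_pos[OF d j1] d j1 by (auto simp: disc_ok_def)
    finally show ?thesis using False by simp
  qed
qed



lemma partA:
  assumes l: "l \<ge> 1" and d: "disc_ok (l+1) g lam"
  shows "\<exists>c k. disc_ok l c k
         \<and> star_rel 0 0 (1 / dmom (l+1) g lam 0) (1 / dmom (l+1) g lam (-1)) (l+1) g lam l c k
         \<and> (\<forall>c' k'. disc_ok l c' k'
              \<and> star_rel 0 0 (1 / dmom (l+1) g lam 0) (1 / dmom (l+1) g lam (-1)) (l+1) g lam l c' k'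
              \<longrightarrow> (\<forall>i\<in>{1..l}. c' i = c i \<and> k' i = k i))
         \<and> (\<forall>i\<in>{1..l}. lam i < k i \<and> k i < lam (Suc i))"
proof -
  define n where "n = Suc l"
  have dn: "disc_ok n g lam" using d by (simp add: n_def)
  have ch: "chain 1 n lam" by (rule disc_chain[OF dn])
  have lpos: "0 < lam i" if "i \<in> {1..n}" for i using disc_pos[OF dn that] .
  have gpos: "0 < g i" if "i \<in> {1..n}" for i using dn that by (simp add: disc_ok_def)
  define P where "P = NUM {1..n} g lam"
  define Q where "Q = PR {1..n} lam"
  have injl: "inj_on lam {1..n}" by (rule chain_inj_gen[OF ch])
  have sgn: "(-1) ^ (j - 1) * poly P (- lam j) > 0" if j: "j \<in> {1..n}" for j
  proof -
    have "poly P (- lam j) = g j * (\<Prod>i\<in>{1..n}-{j}. lam i - lam j)"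
      unfolding P_def by (rule poly_NUM_node[OF _ j injl]) simp
    then have "(-1) ^ (j - 1) * poly P (- lam j) = g j * ((-1) ^ (j - 1) * (\<Prod>i\<in>{1..n}-{j}. lam i - lam j))"
      by simp
    also have "\<dots> > 0" using C1sign[OF ch j] gpos[OF j] by simp
    finally show ?thesis .
  qed
  have "\<forall>j\<in>{1..l}. \<exists>z. lam j < z \<and> z < lam (Suc j) \<and> poly P (- z) = 0"
  proof
    fix j assume j: "j \<in> {1..l}"
    have lt: "lam j < lam (Suc j)" using ch j unfolding chain_def n_def by auto
    have s1: "(-1) ^ (j - 1) * poly P (- lam j) > 0" using sgn[of j] j by (simp add: n_def)
    have s2: "(-1) ^ Suc (j - 1) * poly P (- lam (Suc j)) > 0" using sgn[of "Suc j"] j by (simp add: n_def)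
    show "\<exists>z. lam j < z \<and> z < lam (Suc j) \<and> poly P (- z) = 0" by (rule ROOT1[OF lt s1 s2])
  qed
  then obtain k where k: "\<forall>j\<in>{1..l}. lam j < k j \<and> k j < lam (Suc j) \<and> poly P (- k j) = 0"
    by (metis bchoice)
  define k' where "k' = (\<lambda>j. if j = 0 then 0 else k j)"
  define e where "e = (\<lambda>j. poly (PR {1..n} lam) (- k' j) / (\<Prod>i\<in>{0..l}-{j}. k' i - k' j))"
  have il: "\<forall>j\<in>{1..l}. lam j < k j \<and> (Suc j \<le> n \<longrightarrow> k j < lam (Suc j))" using k by auto
  have lam1: "0 < lam 1" using dn by (simp add: disc_ok_def)
  have nn: "n = l \<or> n = Suc l" by (simp add: n_def)
  note F = FWD[OF l nn ch lam1 il k'_def e_def]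
  have chk: "chain 1 l k" and k1: "0 < k 1" and epos: "\<forall>j\<in>{1..l}. e j > 0"
    and e0: "e 0 = poly Q 0 / poly (PR {1..l} k) 0"
    and id: "\<forall>t>0. poly Q t / poly (PR {1..l} k) t = t + e 0 + (\<Sum>j=1..l. e j * (t / (t + k j)))"
  proof -
    show "chain 1 l k" by (rule F(1))
    show "0 < k 1" by (rule F(2))
    show "\<forall>j\<in>{1..l}. e j > 0" by (rule F(3))
    show "e 0 = poly Q 0 / poly (PR {1..l} k) 0" unfolding Q_def by (rule F(4))
    show "\<forall>t>0. poly Q t / poly (PR {1..l} k) t = t + e 0 + (\<Sum>j=1..l. e j * (t / (t + k j)))"
      unfolding Q_def using F(5) by (simp add: n_def)
  qed
  define m0 where "m0 = (\<Sum>i=1..n. g i)"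
  have m0pos: "m0 > 0" unfolding m0_def using gpos n_def by (intro sum_pos) auto
  have PK: "P = smult m0 (PR {1..l} k)"
  proof (rule FACT[OF _ _ l chk])
    show "degree P \<le> l" using degree_NUM[of "{1..n}" g lam] by (simp add: P_def n_def)
    show "coeff P l = m0" using coeff_NUM[of "{1..n}" g lam] by (simp add: P_def n_def m0_def)
    show "\<forall>i\<in>{1..l}. poly P (- k i) = 0" using k by auto
  qed
  define K where "K = PR {1..l} k"
  have kpos: "0 < k j" if "j \<in> {1..l}" for j using chain_le[OF chk, of 1 j] that k1 by auto
  have Kpos: "poly K t > 0" if "t \<ge> 0" for t unfolding K_def poly_PR using kpos that
    by (intro prod_pos_gen) (simp add: add_nonneg_pos)
  have Qpos: "poly Q t > 0" if "t \<ge> 0" for t unfolding Q_def poly_PR using lpos that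
    by (intro prod_pos_gen) (simp add: add_nonneg_pos)
  have fP: "(\<Sum>i=1..n. g i / (t + lam i)) = poly P t / poly Q t" if "t \<ge> 0" for t
  proof -
    have "\<forall>i\<in>{1..n}. t + lam i \<noteq> 0" using lpos that by (metis add_nonneg_pos less_irrefl)
    then have "poly P t = poly Q t * (\<Sum>i=1..n. g i / (t + lam i))"
      unfolding P_def Q_def by (rule poly_NUM[OF finite_atLeastAtMost])
    then show ?thesis using Qpos[OF that] by simp
  qed
  define c where "c = (\<lambda>j. e j / m0)"
  have dc: "disc_ok l c k"
    using chk k1 epos m0pos unfolding disc_ok_def chain_def c_def by auto
  have mom0: "dmom (l+1) g lam 0 = m0" using dmom0[OF d] by (simp add: m0_def n_def)
  have mom1: "dmom (l+1) g lam (-1) = poly P 0 / poly Q 0"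
    using dmomm1[OF d] fP[of 0] by (simp add: n_def)
  have star: "star_rel 0 0 (1 / dmom (l+1) g lam 0) (1 / dmom (l+1) g lam (-1)) (l+1) g lam l c k"
    unfolding star_rel_def
  proof (intro allI impI)
    fix t :: real assume t: "t > 0"
    have L: "dint (l+1) g lam (\<lambda>u. 1 / (t + u)) = poly P t / poly Q t"
      using fP[of t] t by (simp add: dint_def n_def)
    have "1 / dmom (l+1) g lam 0 * t + 1 / dmom (l+1) g lam (-1) + dint l c k (\<lambda>u. t / (t + u))
        = (t + e 0 + (\<Sum>j=1..l. e j * (t / (t + k j)))) / m0"
    proof -
      have P0: "poly P 0 = m0 * poly K 0" by (simp add: PK K_def)
      have A: "1 / dmom (l+1) g lam (-1) = e 0 / m0"
        unfolding mom1 e0 P0 using m0pos Kpos[of 0] Qpos[of 0] by (simp add: K_def)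
      have B: "dint l c k (\<lambda>u. t / (t + u)) = (\<Sum>j=1..l. e j * (t / (t + k j))) / m0"
        unfolding dint_def c_def sum_divide_distrib by (rule sum.cong) (simp_all add: mult.commute)
      show ?thesis unfolding mom0 A B by (simp add: add_divide_distrib)
    qed
    also have "\<dots> = (poly Q t / poly (PR {1..l} k) t) / m0"
      using id t by simp
    also have "\<dots> = poly Q t / poly P t" by (simp add: PK)
    finally show "0 + 0 / t + dint (l+1) g lam (\<lambda>u. 1 / (t + u)) =
        1 / (1 / dmom (l+1) g lam 0 * t + 1 / dmom (l+1) g lam (-1) + dint l c k (\<lambda>u. t / (t + u)))"
      using L by simp
  qed
  show ?thesis
  proof (intro exI conjI)
    show "disc_ok l c k" by (rule dc)
    show "star_rel 0 0 (1 / dmom (l+1) g lam 0) (1 / dmom (l+1) g lam (-1)) (l+1) g lam l c k" by (rule star)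
    show "\<forall>c' k'. disc_ok l c' k'
              \<and> star_rel 0 0 (1 / dmom (l+1) g lam 0) (1 / dmom (l+1) g lam (-1)) (l+1) g lam l c' k'
              \<longrightarrow> (\<forall>i\<in>{1..l}. c' i = c i \<and> k' i = k i)"
      using UM[OF dc _ star] by blast
    show "\<forall>i\<in>{1..l}. lam i < k i \<and> k i < lam (Suc i)" using k by auto
  qed
qed



lemma partB:
  assumes l: "l \<ge> 1" and a: "a > 0" and b: "b > 0" and d: "disc_ok l c k"
  shows "\<exists>g lam. disc_ok (l+1) g lam \<and> star_rel 0 0 a b (l+1) g lam l c k
         \<and> (\<forall>g' lam'. disc_ok (l+1) g' lam' \<and> star_rel 0 0 a b (l+1) g' lam' l c k
              \<longrightarrow> (\<forall>i\<in>{1..l+1}. g' i = g i \<and> lam' i = lam i))"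
proof -
  have ch: "chain 1 l k" by (rule disc_chain[OF d])
  have kpos: "0 < k i" if "i \<in> {1..l}" for i using disc_pos[OF d that] .
  have cpos: "0 < c i" if "i \<in> {1..l}" for i using d that by (simp add: disc_ok_def)
  have k1: "0 < k 1" using d by (simp add: disc_ok_def)
  define K where "K = PR {1..l} k"
  define G where "G = GP a b c k l"
  define C where "C = (\<Sum>j=1..l. c j)"
  have Cpos: "C \<ge> 0" unfolding C_def using cpos by (intro sum_nonneg) (simp add: less_imp_le)
  define T where "T = 2 * k l + (b + 2 * C) / a + 1"
  have kle: "k j \<le> k l" if "j \<in> {1..l}" for j using chain_le[OF ch, of j l] that by auto
  have "(b + 2 * C) / a > 0" using a b Cpos by simp
  then have klT: "2 * k l < T" by (simp add: T_def)
  define k2 where "k2 = (\<lambda>j. if j = 0 then 0 else if j \<le> l then k j else T)"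
  have ch2: "chain 0 (Suc l) k2"
    unfolding chain_def
  proof (intro allI impI)
    fix i assume i: "0 \<le> i \<and> i < Suc l"
    show "k2 i < k2 (Suc i)"
    proof (cases "i = 0")
      case True then show ?thesis using k1 l by (simp add: k2_def)
    next
      case False
      show ?thesis
      proof (cases "Suc i \<le> l")
        case True then show ?thesis using False ch unfolding chain_def k2_def by auto
      next
        case F2: False
        then have "i = l" using i by simp
        then show ?thesis using False klT kpos[of l] l by (simp add: k2_def)
      qed
    qed
  qed
  have sg: "(-1) ^ j * poly G (- k2 j) > 0" if j: "j \<in> {0..Suc l}" for j
  proof (cases "j \<le> l")
    case True
    have jj: "j \<in> {0..l}" using True by simp
    have "(-1) ^ j * poly G (- (if j = 0 then 0 else k j)) > 0"
      using bspec[OF GP_sign[OF l b d, of a] jj] unfolding G_def .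
    moreover have "k2 j = (if j = 0 then 0 else k j)" using True by (simp add: k2_def)
    ultimately show ?thesis by simp
  next
    case False
    then have jl: "j = Suc l" using j by simp
    have nz: "\<forall>i\<in>{1..l}. - T + k i \<noteq> 0" using kle kpos klT by fastforce
    have GT: "poly G (- T) = poly K (- T) * (a * (- T) + b + (\<Sum>j=1..l. c j * (- T / (- T + k j))))"
      unfolding G_def K_def by (rule GP_poly[OF nz])
    have KT: "(-1) ^ l * poly K (- T) > 0"
      unfolding K_def poly_PR by (rule C2sign[OF ch]) (use klT kpos[of l] l in auto)
    have each: "c j * (- T / (- T + k j)) \<le> 2 * c j" if i: "j \<in> {1..l}" for j
    proof -
      have p: "T - k j > 0" and q2: "T \<le> 2 * (T - k j)" using kle[OF i] klT kpos[OF i] by auto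
      have "- T / (- T + k j) = T / (T - k j)" by (simp add: divide_minus_right[symmetric] minus_divide_divide)
      also have "\<dots> \<le> 2" using p q2 by (simp add: divide_le_eq)
      finally have r: "- T / (- T + k j) \<le> 2" .
      have "c j * (- T / (- T + k j)) \<le> c j * 2"
        by (rule mult_left_mono[OF r]) (use cpos[OF i] in simp)
      then show ?thesis by simp
    qed
    have "(\<Sum>j=1..l. c j * (- T / (- T + k j))) \<le> (\<Sum>j=1..l. 2 * c j)" using each by (intro sum_mono) auto
    also have "\<dots> = 2 * C" by (simp add: C_def sum_distrib_left)
    finally have S: "(\<Sum>j=1..l. c j * (- T / (- T + k j))) \<le> 2 * C" .
    have aT: "a * T = 2 * a * k l + (b + 2 * C) + a" using a by (simp add: T_def field_simps)
    have neg: "a * (- T) + b + (\<Sum>j=1..l. c j * (- T / (- T + k j))) < 0"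
      using S aT a kpos[of l] l by (simp add: algebra_simps) (smt (verit) mult_pos_pos)
    have "(-1) ^ Suc l * poly G (- T) = ((-1) ^ l * poly K (- T)) * (- (a * (- T) + b + (\<Sum>j=1..l. c j * (- T / (- T + k j)))))"
      unfolding GT by (simp add: algebra_simps)
    also have "\<dots> > 0" by (rule mult_pos_pos[OF KT]) (use neg in linarith)
    finally show ?thesis using jl by (simp add: k2_def)
  qed
  have "\<forall>j\<in>{1..Suc l}. \<exists>z. k2 (j - 1) < z \<and> z < k2 j \<and> poly G (- z) = 0"
  proof
    fix j assume j: "j \<in> {1..Suc l}"
    have lt: "k2 (j - 1) < k2 j" using chain_less[OF ch2, of "j - 1" j] j by auto
    have s1: "(-1) ^ (j - 1) * poly G (- k2 (j - 1)) > 0" using sg[of "j - 1"] j by (simp add: le_diff_conv)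
    have s2: "(-1) ^ Suc (j - 1) * poly G (- k2 j) > 0" using sg[of j] j by simp
    show "\<exists>z. k2 (j - 1) < z \<and> z < k2 j \<and> poly G (- z) = 0" by (rule ROOT1[OF lt s1 s2])
  qed
  then obtain lam where lam: "\<forall>j\<in>{1..Suc l}. k2 (j - 1) < lam j \<and> lam j < k2 j \<and> poly G (- lam j) = 0"
    by (metis bchoice)
  define n where "n = Suc l"
  have k2nn: "0 \<le> k2 j" if "j \<le> Suc l" for j
    using chain_le[OF ch2, of 0 j] that by (simp add: k2_def)
  have il: "\<forall>i\<in>{1..n}. 0 < lam i \<and> (2 \<le> i \<longrightarrow> k (i - 1) < lam i) \<and> (i \<le> l \<longrightarrow> lam i < k i)"
  proof
    fix i assume i: "i \<in> {1..n}"
    have A: "k2 (i - 1) < lam i" "lam i < k2 i" using lam i by (auto simp: n_def)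
    have "i - 1 \<le> Suc l" using i unfolding n_def atLeastAtMost_iff by (meson diff_le_self le_trans)
    then have "0 < lam i" using A(1) k2nn[of "i - 1"] by linarith
    moreover have "2 \<le> i \<longrightarrow> k (i - 1) < lam i"
    proof
      assume i2: "2 \<le> i"
      have il1: "i - 1 \<le> l" using i unfolding n_def atLeastAtMost_iff by arith
      have "i - 1 \<noteq> 0" using i2 by arith
      then have "k2 (i - 1) = k (i - 1)" using il1 by (simp add: k2_def)
      then show "k (i - 1) < lam i" using A(1) by simp
    qed
    moreover have "i \<le> l \<longrightarrow> lam i < k i" using A(2) i by (auto simp: k2_def)
    ultimately show "0 < lam i \<and> (2 \<le> i \<longrightarrow> k (i - 1) < lam i) \<and> (i \<le> l \<longrightarrow> lam i < k i)" by blast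
  qed
  define e where "e = (\<lambda>i. poly (PR {1..l} k) (- lam i) / (\<Prod>j\<in>{1..n}-{i}. lam j - lam i))"
  have nn: "n = l \<or> n = Suc l" by (simp add: n_def)
  note B = BWD[OF l nn ch k1 il e_def]
  have chl: "chain 1 n lam" and epos: "\<forall>i\<in>{1..n}. e i > 0"
    and id: "\<forall>t>0. poly K t / poly (PR {1..n} lam) t = (\<Sum>i=1..n. e i / (t + lam i))"
    using B by (auto simp: K_def n_def)
  have GL: "G = smult a (PR {1..n} lam)"
  proof (rule FACT[OF _ _ _ chl])
    have dK: "degree K = l" by (simp add: K_def degree_PR)
    have dN: "degree (NUM {1..l} c k) \<le> l - 1" using degree_NUM[of "{1..l}" c k] by simp
    have d1: "degree (smult b K) \<le> n" using dK by (simp add: n_def)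
    have d2: "degree (smult a (pCons 0 K)) \<le> n" using dK degree_pCons_le[of 0 K] by (simp add: n_def)
    have d3: "degree (pCons 0 (NUM {1..l} c k)) \<le> n"
      using dN degree_pCons_le[of 0 "NUM {1..l} c k"] l by (simp add: n_def)
    show "degree G \<le> n" unfolding G_def GP_def K_def[symmetric]
      using d1 d2 d3 by (intro degree_add_le) auto
    have c1: "coeff K (Suc l) = 0" using dK by (intro coeff_eq_0) auto
    have c2: "coeff K l = 1" using coeff_PR[of "{1..l}" k] by (simp add: K_def)
    have c3: "coeff (NUM {1..l} c k) l = 0" using dN l by (intro coeff_eq_0) auto
    show "coeff G n = a" using c1 c2 c3 unfolding G_def GP_def K_def[symmetric] n_def by simp
    show "1 \<le> n" by (simp add: n_def)
    show "\<forall>i\<in>{1..n}. poly G (- lam i) = 0" using lam by (simp add: n_def)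
  qed
  define L where "L = PR {1..n} lam"
  have lpos: "0 < lam i" if "i \<in> {1..n}" for i using il that by blast
  have Lpos: "poly L t > 0" if "t \<ge> 0" for t unfolding L_def poly_PR using lpos that
    by (intro prod_pos_gen) (simp add: add_nonneg_pos)
  have Kpos: "poly K t > 0" if "t \<ge> 0" for t unfolding K_def poly_PR using kpos that
    by (intro prod_pos_gen) (simp add: add_nonneg_pos)
  define g where "g = (\<lambda>i. e i / a)"
  have dg: "disc_ok (l+1) g lam"
    using chl epos a lpos[of 1] unfolding disc_ok_def chain_def g_def n_def by auto
  have star: "star_rel 0 0 a b (l+1) g lam l c k"
    unfolding star_rel_def
  proof (intro allI impI)
    fix t :: real assume t: "t > 0"
    have nz: "\<forall>i\<in>{1..l}. t + k i \<noteq> 0" using kpos t by (metis add_pos_pos less_irrefl)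
    have Gt: "poly G t = poly K t * (a * t + b + dint l c k (\<lambda>u. t / (t + u)))"
      unfolding G_def K_def dint_def by (rule GP_poly[OF nz])
    have "1 / (a * t + b + dint l c k (\<lambda>u. t / (t + u))) = poly K t / poly G t"
      using Gt Kpos[of t] t by simp
    also have "\<dots> = (poly K t / poly L t) / a" by (simp add: GL L_def)
    also have "\<dots> = (\<Sum>i=1..n. e i / (t + lam i)) / a" using id t by (simp add: L_def)
    also have "\<dots> = dint (l+1) g lam (\<lambda>u. 1 / (t + u))"
      unfolding dint_def g_def n_def sum_divide_distrib Suc_eq_plus1 by (rule sum.cong) simp_all
    finally show "0 + 0 / t + dint (l+1) g lam (\<lambda>u. 1 / (t + u)) = 1 / (a * t + b + dint l c k (\<lambda>u. t / (t + u)))"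
      by simp
  qed
  show ?thesis
  proof (intro exI conjI)
    show "disc_ok (l+1) g lam" by (rule dg)
    show "star_rel 0 0 a b (l+1) g lam l c k" by (rule star)
    show "\<forall>g' lam'. disc_ok (l+1) g' lam' \<and> star_rel 0 0 a b (l+1) g' lam' l c k
              \<longrightarrow> (\<forall>i\<in>{1..l+1}. g' i = g i \<and> lam' i = lam i)"
      using UMm[OF dg _ star] by blast
  qed
qed



lemma partC:
  assumes l: "l \<ge> 1" and q: "q > 0" and d: "disc_ok l g lam"
  shows "\<exists>c k. disc_ok l c k
         \<and> star_rel q 0 0 (1 / (q + dmom l g lam (-1))) l g lam l c k
         \<and> (\<forall>c' k'. disc_ok l c' k'
              \<and> star_rel q 0 0 (1 / (q + dmom l g lam (-1))) l g lam l c' k'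
              \<longrightarrow> (\<forall>i\<in>{1..l}. c' i = c i \<and> k' i = k i))
         \<and> (\<forall>i\<in>{1..l}. lam i < k i)
         \<and> (\<forall>i. 1 \<le> i \<and> i < l \<longrightarrow> k i < lam (Suc i))
         \<and> k l \<le> lam l + dmom l g lam 0 / q"
proof -
  have ch: "chain 1 l lam" by (rule disc_chain[OF d])
  have lpos: "0 < lam i" if "i \<in> {1..l}" for i using disc_pos[OF d that] .
  have gpos: "0 < g i" if "i \<in> {1..l}" for i using d that by (simp add: disc_ok_def)
  define Q where "Q = PR {1..l} lam"
  define NU where "NU = NUM {1..l} g lam"
  define P where "P = smult q Q + NU"
  define m0 where "m0 = (\<Sum>i=1..l. g i)"
  have m0pos: "m0 > 0" unfolding m0_def using gpos l by (intro sum_pos) auto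
  define T where "T = lam l + m0 / q"
  have lT: "lam l < T" using m0pos q by (simp add: T_def)
  have injl: "inj_on lam {1..l}" by (rule chain_inj_gen[OF ch])
  have sgn: "(-1) ^ (j - 1) * poly P (- lam j) > 0" if j: "j \<in> {1..l}" for j
  proof -
    have "poly Q (- lam j) = 0" unfolding Q_def poly_PR using j by (intro prod_zero) auto
    moreover have "poly NU (- lam j) = g j * (\<Prod>i\<in>{1..l}-{j}. lam i - lam j)"
      unfolding NU_def by (rule poly_NUM_node[OF _ j injl]) simp
    ultimately have "(-1) ^ (j - 1) * poly P (- lam j) = g j * ((-1) ^ (j - 1) * (\<Prod>i\<in>{1..l}-{j}. lam i - lam j))"
      by (simp add: P_def)
    also have "\<dots> > 0" using C1sign[OF ch j] gpos[OF j] by simp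
    finally show ?thesis .
  qed
  have sgnT: "(-1) ^ Suc (l - 1) * poly P (- T) \<ge> 0"
  proof -
    have le: "lam i \<le> lam l" if "i \<in> {1..l}" for i using chain_le[OF ch, of i l] that by auto
    have nz: "\<forall>i\<in>{1..l}. - T + lam i \<noteq> 0" using le lT by fastforce
    have PT: "poly P (- T) = poly Q (- T) * (q + (\<Sum>i=1..l. g i / (- T + lam i)))"
      using poly_NUM[OF _ nz, of g] by (simp add: P_def NU_def Q_def algebra_simps)
    have QT: "(-1) ^ l * poly Q (- T) > 0"
      unfolding Q_def poly_PR by (rule C2sign[OF ch]) (use lT in auto)
    have each: "g i / (- T + lam i) \<ge> - (g i * q / m0)" if i: "i \<in> {1..l}" for i
    proof -
      have a: "T - lam i \<ge> m0 / q" using le[OF i] by (simp add: T_def)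
      have b: "m0 / q > 0" using m0pos q by simp
      have "g i / (T - lam i) \<le> g i / (m0 / q)"
        using gpos[OF i] a b by (intro frac_le) auto
      then have "g i / (T - lam i) \<le> g i * q / m0" by simp
      moreover have "g i / (- T + lam i) = - (g i / (T - lam i))" by (simp add: divide_minus_right[symmetric])
      ultimately show ?thesis by simp
    qed
    have "(\<Sum>i=1..l. g i / (- T + lam i)) \<ge> (\<Sum>i=1..l. - (g i * q / m0))"
      using each by (intro sum_mono) auto
    also have "(\<Sum>i=1..l. - (g i * q / m0)) = - q"
      using m0pos by (simp add: sum_negf sum_divide_distrib[symmetric] sum_distrib_right[symmetric] m0_def)
    finally have "q + (\<Sum>i=1..l. g i / (- T + lam i)) \<ge> 0" by simp
    then have "((-1) ^ l * poly Q (- T)) * (q + (\<Sum>i=1..l. g i / (- T + lam i))) \<ge> 0"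
      using QT by simp
    then show ?thesis using l PT by (simp add: algebra_simps)
  qed
  have "\<forall>j\<in>{1..l}. \<exists>z. lam j < z \<and> (j < l \<longrightarrow> z < lam (Suc j)) \<and> z \<le> T \<and> poly P (- z) = 0"
  proof
    fix j assume j: "j \<in> {1..l}"
    show "\<exists>z. lam j < z \<and> (j < l \<longrightarrow> z < lam (Suc j)) \<and> z \<le> T \<and> poly P (- z) = 0"
    proof (cases "j < l")
      case True
      have lt: "lam j < lam (Suc j)" using ch j True unfolding chain_def by auto
      have s1: "(-1) ^ (j - 1) * poly P (- lam j) > 0" using sgn[of j] j by simp
      have s2: "(-1) ^ Suc (j - 1) * poly P (- lam (Suc j)) > 0" using sgn[of "Suc j"] j True by simp
      obtain z where z: "lam j < z" "z < lam (Suc j)" "poly P (- z) = 0" using ROOT1[OF lt s1 s2] by blast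
      have "lam (Suc j) \<le> lam l" using chain_le[OF ch, of "Suc j" l] True by auto
      then show ?thesis using z True lT by (intro exI[of _ z]) auto
    next
      case False
      then have jl: "j = l" using j by auto
      have s1: "(-1) ^ (l - 1) * poly P (- lam l) > 0" using sgn[of l] l by simp
      obtain z where z: "lam l < z" "z \<le> T" "poly P (- z) = 0" using ROOT2[OF lT s1 sgnT] by blast
      then show ?thesis using jl by (intro exI[of _ z]) auto
    qed
  qed
  then obtain k where k: "\<forall>j\<in>{1..l}. lam j < k j \<and> (j < l \<longrightarrow> k j < lam (Suc j)) \<and> k j \<le> T \<and> poly P (- k j) = 0"
    by (metis bchoice)
  define k' where "k' = (\<lambda>j. if j = 0 then 0 else k j)"
  define e where "e = (\<lambda>j. poly (PR {1..l} lam) (- k' j) / (\<Prod>i\<in>{0..l}-{j}. k' i - k' j))"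
  have il: "\<forall>j\<in>{1..l}. lam j < k j \<and> (Suc j \<le> l \<longrightarrow> k j < lam (Suc j))" using k by auto
  have lam1: "0 < lam 1" using d by (simp add: disc_ok_def)
  have nn: "l = l \<or> l = Suc l" by simp
  note F = FWD[OF l nn ch lam1 il k'_def e_def]
  have chk: "chain 1 l k" and k1: "0 < k 1" and epos: "\<forall>j\<in>{1..l}. e j > 0"
    and e0: "e 0 = poly Q 0 / poly (PR {1..l} k) 0"
    and id: "\<forall>t>0. poly Q t / poly (PR {1..l} k) t = e 0 + (\<Sum>j=1..l. e j * (t / (t + k j)))"
  proof -
    show "chain 1 l k" by (rule F(1))
    show "0 < k 1" by (rule F(2))
    show "\<forall>j\<in>{1..l}. e j > 0" by (rule F(3))
    show "e 0 = poly Q 0 / poly (PR {1..l} k) 0" unfolding Q_def by (rule F(4))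
    show "\<forall>t>0. poly Q t / poly (PR {1..l} k) t = e 0 + (\<Sum>j=1..l. e j * (t / (t + k j)))"
      unfolding Q_def using F(5) by simp
  qed
  have PK: "P = smult q (PR {1..l} k)"
  proof (rule FACT[OF _ _ l chk])
    have dQ: "degree Q = l" by (simp add: Q_def degree_PR)
    have dN: "degree NU \<le> l - 1" using degree_NUM[of "{1..l}" g lam] by (simp add: NU_def)
    show "degree P \<le> l" unfolding P_def using dQ dN
      by (intro degree_add_le) (auto simp: degree_smult_le)
    have "coeff NU l = 0" using dN l by (intro coeff_eq_0) auto
    then show "coeff P l = q" using coeff_PR[of "{1..l}" lam] by (simp add: P_def Q_def)
    show "\<forall>i\<in>{1..l}. poly P (- k i) = 0" using k by auto
  qed
  define K where "K = PR {1..l} k"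
  have kpos: "0 < k j" if "j \<in> {1..l}" for j using chain_le[OF chk, of 1 j] that k1 by auto
  have Kpos: "poly K t > 0" if "t \<ge> 0" for t unfolding K_def poly_PR using kpos that
    by (intro prod_pos_gen) (simp add: add_nonneg_pos)
  have Qpos: "poly Q t > 0" if "t \<ge> 0" for t unfolding Q_def poly_PR using lpos that
    by (intro prod_pos_gen) (simp add: add_nonneg_pos)
  have fP: "q + (\<Sum>i=1..l. g i / (t + lam i)) = poly P t / poly Q t" if "t \<ge> 0" for t
  proof -
    have "\<forall>i\<in>{1..l}. t + lam i \<noteq> 0" using lpos that by (metis add_nonneg_pos less_irrefl)
    then have "poly NU t = poly Q t * (\<Sum>i=1..l. g i / (t + lam i))"
      unfolding NU_def Q_def by (rule poly_NUM[OF finite_atLeastAtMost])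
    then show ?thesis using Qpos[OF that] by (simp add: P_def field_simps)
  qed
  define c where "c = (\<lambda>j. e j / q)"
  have dc: "disc_ok l c k"
    using chk k1 epos q unfolding disc_ok_def chain_def c_def by auto
  have mom1: "q + dmom l g lam (-1) = poly P 0 / poly Q 0"
    using dmomm1[OF d] fP[of 0] by simp
  have star: "star_rel q 0 0 (1 / (q + dmom l g lam (-1))) l g lam l c k"
    unfolding star_rel_def
  proof (intro allI impI)
    fix t :: real assume t: "t > 0"
    have L: "q + 0 / t + dint l g lam (\<lambda>u. 1 / (t + u)) = poly P t / poly Q t"
      using fP[of t] t by (simp add: dint_def)
    have "0 * t + 1 / (q + dmom l g lam (-1)) + dint l c k (\<lambda>u. t / (t + u))
        = (e 0 + (\<Sum>j=1..l. e j * (t / (t + k j)))) / q"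
    proof -
      have P0: "poly P 0 = q * poly K 0" by (simp add: PK K_def)
      have A: "1 / (q + dmom l g lam (-1)) = e 0 / q"
        unfolding mom1 e0 P0 using q Kpos[of 0] Qpos[of 0] by (simp add: K_def)
      have B: "dint l c k (\<lambda>u. t / (t + u)) = (\<Sum>j=1..l. e j * (t / (t + k j))) / q"
        unfolding dint_def c_def sum_divide_distrib by (rule sum.cong) (simp_all add: mult.commute)
      show ?thesis unfolding A B by (simp add: add_divide_distrib)
    qed
    also have "\<dots> = (poly Q t / poly (PR {1..l} k) t) / q"
      using id t by simp
    also have "\<dots> = poly Q t / poly P t" by (simp add: PK)
    finally show "q + 0 / t + dint l g lam (\<lambda>u. 1 / (t + u)) =
        1 / (0 * t + 1 / (q + dmom l g lam (-1)) + dint l c k (\<lambda>u. t / (t + u)))"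
      using L by simp
  qed
  have kl: "k l \<le> lam l + dmom l g lam 0 / q" using k l dmom0[OF d] by (auto simp: T_def m0_def)
  show ?thesis
  proof (intro exI conjI)
    show "disc_ok l c k" by (rule dc)
    show "star_rel q 0 0 (1 / (q + dmom l g lam (-1))) l g lam l c k" by (rule star)
    show "\<forall>c' k'. disc_ok l c' k'
              \<and> star_rel q 0 0 (1 / (q + dmom l g lam (-1))) l g lam l c' k'
              \<longrightarrow> (\<forall>i\<in>{1..l}. c' i = c i \<and> k' i = k i)"
      using UM[OF dc _ star] by blast
    show "\<forall>i\<in>{1..l}. lam i < k i" using k by auto
    show "\<forall>i. 1 \<le> i \<and> i < l \<longrightarrow> k i < lam (Suc i)" using k by auto
    show "k l \<le> lam l + dmom l g lam 0 / q" by (rule kl)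
  qed
qed



lemma partD:
  assumes l: "l \<ge> 1" and b: "b > 0" and d: "disc_ok l c k"
  shows "\<exists>g lam. disc_ok l g lam \<and> star_rel (1 / (b + dmom l c k 0)) 0 0 b l g lam l c k
         \<and> (\<forall>g' lam'. disc_ok l g' lam' \<and> star_rel (1 / (b + dmom l c k 0)) 0 0 b l g' lam' l c k
              \<longrightarrow> (\<forall>i\<in>{1..l}. g' i = g i \<and> lam' i = lam i))"
proof -
  have ch: "chain 1 l k" by (rule disc_chain[OF d])
  have kpos: "0 < k i" if "i \<in> {1..l}" for i using disc_pos[OF d that] .
  have cpos: "0 < c i" if "i \<in> {1..l}" for i using d that by (simp add: disc_ok_def)
  have k1: "0 < k 1" using d by (simp add: disc_ok_def)
  define K where "K = PR {1..l} k"
  define G where "G = GP 0 b c k l"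
  define C where "C = (\<Sum>j=1..l. c j)"
  have Cpos: "C \<ge> 0" unfolding C_def using cpos by (intro sum_nonneg) (simp add: less_imp_le)
  define k2 where "k2 = (\<lambda>j. if j = 0 then 0 else k j)"
  have ch2: "chain 0 l k2"
    unfolding chain_def
  proof (intro allI impI)
    fix i assume i: "0 \<le> i \<and> i < l"
    show "k2 i < k2 (Suc i)"
    proof (cases "i = 0")
      case True then show ?thesis using k1 by (simp add: k2_def)
    next
      case False then show ?thesis using ch i unfolding chain_def k2_def by simp
    qed
  qed
  have sg: "(-1) ^ j * poly G (- k2 j) > 0" if j: "j \<in> {0..l}" for j
    using bspec[OF GP_sign[OF l b d, of 0] j] unfolding G_def k2_def .
  have "\<forall>j\<in>{1..l}. \<exists>z. k2 (j - 1) < z \<and> z < k2 j \<and> poly G (- z) = 0"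
  proof
    fix j assume j: "j \<in> {1..l}"
    have lt: "k2 (j - 1) < k2 j" using chain_less[OF ch2, of "j - 1" j] j by auto
    have jj: "j - 1 \<in> {0..l}" using j unfolding atLeastAtMost_iff by arith
    have s1: "(-1) ^ (j - 1) * poly G (- k2 (j - 1)) > 0" by (rule sg[OF jj])
    have s2: "(-1) ^ Suc (j - 1) * poly G (- k2 j) > 0" using sg[of j] j by simp
    show "\<exists>z. k2 (j - 1) < z \<and> z < k2 j \<and> poly G (- z) = 0" by (rule ROOT1[OF lt s1 s2])
  qed
  then obtain lam where lam: "\<forall>j\<in>{1..l}. k2 (j - 1) < lam j \<and> lam j < k2 j \<and> poly G (- lam j) = 0"
    by (metis bchoice)
  have k2nn: "0 \<le> k2 j" if "j \<le> l" for j
    using chain_le[OF ch2, of 0 j] that by (simp add: k2_def)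
  have il: "\<forall>i\<in>{1..l}. 0 < lam i \<and> (2 \<le> i \<longrightarrow> k (i - 1) < lam i) \<and> (i \<le> l \<longrightarrow> lam i < k i)"
  proof
    fix i assume i: "i \<in> {1..l}"
    have A: "k2 (i - 1) < lam i" "lam i < k2 i" using lam i by auto
    have il1: "i - 1 \<le> l" using i unfolding atLeastAtMost_iff by arith
    then have "0 < lam i" using A(1) k2nn[of "i - 1"] by linarith
    moreover have "2 \<le> i \<longrightarrow> k (i - 1) < lam i"
    proof
      assume i2: "2 \<le> i"
      have "i - 1 \<noteq> 0" using i2 by arith
      then have "k2 (i - 1) = k (i - 1)" by (simp add: k2_def)
      then show "k (i - 1) < lam i" using A(1) by simp
    qed
    moreover have "i \<le> l \<longrightarrow> lam i < k i" using A(2) i by (auto simp: k2_def)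
    ultimately show "0 < lam i \<and> (2 \<le> i \<longrightarrow> k (i - 1) < lam i) \<and> (i \<le> l \<longrightarrow> lam i < k i)" by blast
  qed
  define e where "e = (\<lambda>i. poly (PR {1..l} k) (- lam i) / (\<Prod>j\<in>{1..l}-{i}. lam j - lam i))"
  have nn: "l = l \<or> l = Suc l" by simp
  note B = BWD[OF l nn ch k1 il e_def]
  have chl: "chain 1 l lam" by (rule B(1))
  have epos: "\<forall>i\<in>{1..l}. e i > 0" by (rule B(2))
  have id: "\<forall>t>0. poly K t / poly (PR {1..l} lam) t = 1 + (\<Sum>i=1..l. e i / (t + lam i))"
    unfolding K_def using B(3) by simp
  have GL: "G = smult (b + C) (PR {1..l} lam)"
  proof (rule FACT[OF _ _ l chl])
    have dK: "degree K = l" by (simp add: K_def degree_PR)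
    have dN: "degree (NUM {1..l} c k) \<le> l - 1" using degree_NUM[of "{1..l}" c k] by simp
    have d1: "degree (smult b K) \<le> l" using dK by simp
    have d3: "degree (pCons 0 (NUM {1..l} c k)) \<le> l"
      using dN degree_pCons_le[of 0 "NUM {1..l} c k"] l by simp
    show "degree G \<le> l" unfolding G_def GP_def K_def[symmetric]
      using d1 d3 by (simp add: degree_add_le)
    have c2: "coeff K l = 1" using coeff_PR[of "{1..l}" k] by (simp add: K_def)
    have c3: "coeff (NUM {1..l} c k) (l - 1) = C" using coeff_NUM[of "{1..l}" c k] by (simp add: C_def)
    have c4: "coeff (pCons 0 (NUM {1..l} c k)) l = C"
    proof -
      have "l = Suc (l - 1)" using l by simp
      then have "coeff (pCons 0 (NUM {1..l} c k)) l = coeff (NUM {1..l} c k) (l - 1)"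
        by (metis coeff_pCons_Suc)
      then show ?thesis using c3 by simp
    qed
    show "coeff G l = b + C" using c2 c4 unfolding G_def GP_def K_def[symmetric] by simp
    show "\<forall>i\<in>{1..l}. poly G (- lam i) = 0" using lam by simp
  qed
  define L where "L = PR {1..l} lam"
  have lpos: "0 < lam i" if "i \<in> {1..l}" for i using il that by blast
  have Lpos: "poly L t > 0" if "t \<ge> 0" for t unfolding L_def poly_PR using lpos that
    by (intro prod_pos_gen) (simp add: add_nonneg_pos)
  have Kpos: "poly K t > 0" if "t \<ge> 0" for t unfolding K_def poly_PR using kpos that
    by (intro prod_pos_gen) (simp add: add_nonneg_pos)
  define q where "q = 1 / (b + C)"
  have qpos: "q > 0" using b Cpos by (simp add: q_def)
  have qeq: "1 / (b + dmom l c k 0) = q" using dmom0[OF d] by (simp add: q_def C_def)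
  define g where "g = (\<lambda>i. q * e i)"
  have dg: "disc_ok l g lam"
    using chl epos qpos lpos[of 1] l unfolding disc_ok_def chain_def g_def by auto
  have star: "star_rel (1 / (b + dmom l c k 0)) 0 0 b l g lam l c k"
    unfolding star_rel_def qeq
  proof (intro allI impI)
    fix t :: real assume t: "t > 0"
    have nz: "\<forall>i\<in>{1..l}. t + k i \<noteq> 0" using kpos t by (metis add_pos_pos less_irrefl)
    have Gt: "poly G t = poly K t * (0 * t + b + dint l c k (\<lambda>u. t / (t + u)))"
      unfolding G_def K_def dint_def by (rule GP_poly[OF nz])
    have "1 / (0 * t + b + dint l c k (\<lambda>u. t / (t + u))) = poly K t / poly G t"
      using Gt Kpos[of t] t by simp
    also have "\<dots> = (poly K t / poly L t) * q" by (simp add: GL L_def q_def)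
    also have "\<dots> = q + (\<Sum>i=1..l. e i / (t + lam i)) * q" using id t by (simp add: L_def algebra_simps)
    also have "\<dots> = q + dint l g lam (\<lambda>u. 1 / (t + u))"
      unfolding dint_def g_def sum_distrib_right by (simp add: mult.commute)
    finally show "q + 0 / t + dint l g lam (\<lambda>u. 1 / (t + u)) = 1 / (0 * t + b + dint l c k (\<lambda>u. t / (t + u)))"
      by simp
  qed
  show ?thesis
  proof (intro exI conjI)
    show "disc_ok l g lam" by (rule dg)
    show "star_rel (1 / (b + dmom l c k 0)) 0 0 b l g lam l c k" by (rule star)
    show "\<forall>g' lam'. disc_ok l g' lam' \<and> star_rel (1 / (b + dmom l c k 0)) 0 0 b l g' lam' l c k
              \<longrightarrow> (\<forall>i\<in>{1..l}. g' i = g i \<and> lam' i = lam i)"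
      using UMm[OF dg _ star] by blast
  qed
qed


theorem proposition5p1:
  fixes l :: nat
  assumes "l \<ge> 1"
  shows
  "(\<forall>g lam. disc_ok (l+1) g lam \<longrightarrow>
      (\<exists>c k. disc_ok l c k
         \<and> star_rel 0 0 (1 / dmom (l+1) g lam 0) (1 / dmom (l+1) g lam (-1)) (l+1) g lam l c k
         \<and> (\<forall>c' k'. disc_ok l c' k'
              \<and> star_rel 0 0 (1 / dmom (l+1) g lam 0) (1 / dmom (l+1) g lam (-1)) (l+1) g lam l c' k'
              \<longrightarrow> (\<forall>i\<in>{1..l}. c' i = c i \<and> k' i = k i))
         \<and> (\<forall>i\<in>{1..l}. lam i < k i \<and> k i < lam (Suc i))))
 \<and> (\<forall>a b c k. a > 0 \<and> b > 0 \<and> disc_ok l c k \<longrightarrow>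
      (\<exists>g lam. disc_ok (l+1) g lam \<and> star_rel 0 0 a b (l+1) g lam l c k
         \<and> (\<forall>g' lam'. disc_ok (l+1) g' lam' \<and> star_rel 0 0 a b (l+1) g' lam' l c k
              \<longrightarrow> (\<forall>i\<in>{1..l+1}. g' i = g i \<and> lam' i = lam i))))
 \<and> (\<forall>q g lam. q > 0 \<and> disc_ok l g lam \<longrightarrow>
      (\<exists>c k. disc_ok l c k
         \<and> star_rel q 0 0 (1 / (q + dmom l g lam (-1))) l g lam l c k
         \<and> (\<forall>c' k'. disc_ok l c' k'
              \<and> star_rel q 0 0 (1 / (q + dmom l g lam (-1))) l g lam l c' k'
              \<longrightarrow> (\<forall>i\<in>{1..l}. c' i = c i \<and> k' i = k i))
         \<and> (\<forall>i\<in>{1..l}. lam i < k i)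
         \<and> (\<forall>i. 1 \<le> i \<and> i < l \<longrightarrow> k i < lam (Suc i))
         \<and> k l \<le> lam l + dmom l g lam 0 / q))
 \<and> (\<forall>b c k. b > 0 \<and> disc_ok l c k \<longrightarrow>
      (\<exists>g lam. disc_ok l g lam \<and> star_rel (1 / (b + dmom l c k 0)) 0 0 b l g lam l c k
         \<and> (\<forall>g' lam'. disc_ok l g' lam' \<and> star_rel (1 / (b + dmom l c k 0)) 0 0 b l g' lam' l c k
              \<longrightarrow> (\<forall>i\<in>{1..l}. g' i = g i \<and> lam' i = lam i))))"
  apply (intro conjI allI impI)
     apply (rule partA[OF assms]; assumption)
    apply (elim conjE, rule partB[OF assms]; assumption)
   apply (elim conjE, rule partC[OF assms]; assumption)
  apply (elim conjE, rule partD[OF assms]; assumption)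
  done

end
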